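(* Let $m$ be an even integer with $m\ge 62$, and let $\beta(m)$ be the largest root of $Z(x)=x^3-x^2-(m-2)x+m-3$. Then $\sqrt{m-2}<\beta(m)<\sqrt{m-1.85}$. *)

theory Defs
  imports Complex_Main
begin

definition Zpoly :: "int \<Rightarrow> real \<Rightarrow> real" where
  "Zpoly m x = x ^ 3 - x ^ 2 - (real_of_int m - 2) * x + real_of_int m - 3"

definition beta :: "int \<Rightarrow> real" where
  "beta m = Max {x. Zpoly m x = 0}"

end

theory Submission
  imports Defs "HOL-Computational_Algebra.Polynomial"
begin

theorem lemma2p4:
  fixes m :: int
  assumes "even m" and "m \<ge> 62"
  shows "sqrt (real_of_int m - 2) < beta m \<and> beta m < sqrt (real_of_int m - 1.85)"
proof -
  define M where "M = real_of_int m"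
  have M: "M \<ge> 62" using assms(2) unfolding M_def by simp
  define a where "a = sqrt (M - 2)"
  define b where "b = sqrt (M - 1.85)"
  have a2: "a^2 = M - 2" and a0: "a \<ge> 0" using M unfolding a_def by auto
  have b2: "b^2 = M - 1.85" and b0: "b \<ge> 0" using M unfolding b_def by auto
  have b2': "b^2 = M - 37/20" using b2 by simp
  have ab: "a \<le> b" unfolding a_def b_def by (rule real_sqrt_le_mono) simp
  have bbig: "b > 7.7" unfolding b_def by (rule real_less_rsqrt) (use M in \<open>simp add: power2_eq_square\<close>)
  have "(M - 2)^2 > M - 1.85"
  proof -
    have "(M - 2)^2 \<ge> 60 * (M - 2)" unfolding power2_eq_square using M by (intro mult_right_mono) auto
    moreover have "M - 1.85 < 60 * (M - 2)" using M by simp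
    ultimately show ?thesis by linarith
  qed
  hence "b < sqrt ((M - 2)^2)" unfolding b_def by (rule real_sqrt_less_mono)
  hence bM: "b < M - 2" using M by simp
  have Zx: "Zpoly m x = x^3 - x^2 - (M - 2) * x + M - 3" for x
    unfolding Zpoly_def M_def by simp
  have Za: "Zpoly m a = -1" unfolding Zx
  proof -
    have "a^3 = a * a^2" by (simp add: power3_eq_cube power2_eq_square)
    then show "a ^ 3 - a\<^sup>2 - (M - 2) * a + M - 3 = - 1" using a2 by (simp add: algebra_simps)
  qed
  have Zb: "Zpoly m b > 0" unfolding Zx
  proof -
    have "b^3 = b * b^2" by (simp add: power3_eq_cube power2_eq_square)
    then show "b ^ 3 - b\<^sup>2 - (M - 2) * b + M - 3 > 0" using b2 bbig by (simp add: algebra_simps)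
  qed
  have noroot: "Zpoly m x > 0" if "x \<ge> b" for x
  proof -
    have diff: "Zpoly m x - Zpoly m b = (x - b) * (x^2 + x*b + b^2 - (x + b) - (M - 2))"
      unfolding Zx by (simp add: algebra_simps power2_eq_square power3_eq_cube)
    have "x^2 - x \<ge> b^2 - b"
    proof -
      have "x^2 - x - (b^2 - b) = (x - b) * (x + b - 1)" by (simp add: algebra_simps power2_eq_square)
      also have "\<dots> \<ge> 0" using that bbig by simp
      finally show ?thesis by simp
    qed
    moreover have "x*b - b \<ge> b^2 - b" using that b0 by (simp add: power2_eq_square mult_right_mono)
    ultimately have "x^2 + x*b + b^2 - (x + b) - (M - 2) \<ge> 0" using b2' bM by linarith
    hence "(x - b) * (x^2 + x*b + b^2 - (x + b) - (M - 2)) \<ge> 0" using that by simp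
    thus ?thesis using diff Zb by linarith
  qed
  have cont: "\<forall>x. a \<le> x \<and> x \<le> b \<longrightarrow> isCont (Zpoly m) x"
    unfolding Zpoly_def by (intro allI impI) (intro continuous_intros)
  obtain r where r: "a \<le> r" "r \<le> b" "Zpoly m r = 0"
    using IVT[of "Zpoly m" a 0 b] Za Zb ab cont by auto
  have ra: "r > a" using r Za by (metis order_le_less zero_neq_neg_one)
  let ?S = "{x. Zpoly m x = 0}"
  have polyeq: "Zpoly m x = poly [:M - 3, -(M - 2), -1, 1:] x" for x
    unfolding Zx by (simp add: algebra_simps power2_eq_square power3_eq_cube)
  have fin: "finite ?S"
  proof -
    have "?S = {x. poly [:M - 3, -(M - 2), -1, 1:] x = 0}" using polyeq by auto
    moreover have "[:M - 3, -(M - 2), -1, 1:] \<noteq> 0" by simp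
    ultimately show ?thesis using poly_roots_finite by metis
  qed
  have rS: "r \<in> ?S" using r by simp
  have ne: "?S \<noteq> {}" using rS by blast
  have "beta m \<in> ?S" unfolding beta_def using Max_in[OF fin ne] .
  hence lt: "beta m < b" using noroot by (metis (mono_tags) less_irrefl mem_Collect_eq not_le)
  have "r \<le> beta m" unfolding beta_def using Max_ge[OF fin rS] .
  thus ?thesis using lt ra unfolding a_def b_def M_def by simp
qed

end
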